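(* Let $(V,\{\nu_n\})$ and $(W,\{\omega_n\})$ be $L^\infty$-MOS's and $\phi:V\to W$ a completely gauge-contractive linear map. Then the unital extension $\phi_1:V_1\to W_1$, $\phi_1(x,\lambda)=(\phi(x),\lambda)$, is completely positive. If moreover $\phi$ is completely gauge-isometric, then $\phi_1$ is a complete order embedding.
   Context: An $L^\infty$-MOS is a complex $*$-vector space $V$ ($M_n(V)$ with $(x_{ij})^*=(x_{ji}^* )$, self-adjoint part $M_n(V)_{sa}$) with proper gauges $\nu_n:M_n(V)_{sa}\to[0,\infty)$ (subadditive, positively homogeneous, $\nu_n(A)=\nu_n(-A)=0\Rightarrow A=0$) such that $\nu_k(X^*AX)\le\|X\|^2\nu_n(A)$ for scalar $X\in M_{n,k}$ and $\nu_{n+k}(A\oplus B)=\max\{\nu_n(A),\nu_k(B)\}$. A linear map $\phi$ between $L^\infty$-MOS's is completely gauge-contractive if $\phi(x^* )=\phi(x)^*$ and $\omega_n(\phi^{(n)}(A))\le\nu_n(A)$ for all $n$, $A\in M_n(V)_{sa}$; completely gauge-isometric if it is self-adjoint and $\omega_n(\phi^{(n)}(A))=\nu_n(A)$ for all $n$, $A$. Unitization: $V_1=V\oplus\mathbb{C}$, $M_n(V_1)=M_n(V)\oplus M_n$, $(A,X)^*=(A^*,X^* )$, $X_t=tI_n-X$, $Y\gg0$ means positive invertible, $u_n(A,X)=\inf\{t>0:X_t\gg0,\ \nu_n(X_t^{-1/2}AX_t^{-1/2})\le1\}$, with cones $M_n(V_1)_+=\{(A,X):u_n(-A,-X)=0\}$;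 similarly for $W_1$. Completely positive: each amplification maps positive cones into positive cones; complete order embedding: injective with $\phi_1^{(n)}(Z)\ge0$ iff $Z\ge0$ for all $n$. *)

theory Defs
  imports Complex_Main "HOL-Library.Extended_Real" "HOL-Library.Product_Plus"
begin

text \<open>An n x k matrix with entries in a type 'a (with a zero) is represented by a
function nat => nat => 'a that vanishes outside the index rectangle {0..<n} x {0..<k}.\<close>

definition rect :: "nat \<Rightarrow> nat \<Rightarrow> (nat \<Rightarrow> nat \<Rightarrow> 'a::zero) set" where
  "rect n k = {A. \<forall>i j. \<not> (i < n \<and> j < k) \<longrightarrow> A i j = 0}"

abbreviation sq :: "nat \<Rightarrow> (nat \<Rightarrow> nat \<Rightarrow> 'a::zero) set" where
  "sq n \<equiv> rect n n"

definition cmult :: "nat \<Rightarrow> (nat \<Rightarrow> nat \<Rightarrow> complex) \<Rightarrow> (nat \<Rightarrow> nat \<Rightarrow> complex)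
    \<Rightarrow> (nat \<Rightarrow> nat \<Rightarrow> complex)" where
  "cmult m Y Z = (\<lambda>i j. \<Sum>l<m. Y i l * Z l j)"

definition cid :: "nat \<Rightarrow> nat \<Rightarrow> nat \<Rightarrow> complex" where
  "cid n = (\<lambda>i j. if i = j \<and> i < n then 1 else 0)"

definition cadj :: "(nat \<Rightarrow> nat \<Rightarrow> complex) \<Rightarrow> (nat \<Rightarrow> nat \<Rightarrow> complex)" where
  "cadj X = (\<lambda>i j. cnj (X j i))"

definition opnorm :: "nat \<Rightarrow> nat \<Rightarrow> (nat \<Rightarrow> nat \<Rightarrow> complex) \<Rightarrow> real" where
  "opnorm n k X = Sup {sqrt (\<Sum>p<n. (cmod (\<Sum>j<k. X p j * v j))\<^sup>2) | v.
                        (\<Sum>j<k. (cmod (v j))\<^sup>2) \<le> 1}"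

definition cpos :: "nat \<Rightarrow> (nat \<Rightarrow> nat \<Rightarrow> complex) \<Rightarrow> bool" where
  "cpos n Y \<longleftrightarrow> Y \<in> sq n \<and>
     (\<forall>v. Im (\<Sum>i<n. \<Sum>j<n. cnj (v i) * Y i j * v j) = 0 \<and>
          Re (\<Sum>i<n. \<Sum>j<n. cnj (v i) * Y i j * v j) \<ge> 0)"

definition posinv :: "nat \<Rightarrow> (nat \<Rightarrow> nat \<Rightarrow> complex) \<Rightarrow> bool" where
  "posinv n Y \<longleftrightarrow> cpos n Y \<and> (\<exists>Z\<in>sq n. cmult n Y Z = cid n \<and> cmult n Z Y = cid n)"

definition isqrt :: "nat \<Rightarrow> (nat \<Rightarrow> nat \<Rightarrow> complex) \<Rightarrow> (nat \<Rightarrow> nat \<Rightarrow> complex)" where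
  "isqrt n Y = (THE S. cpos n S \<and> cmult n (cmult n S S) Y = cid n)"

text \<open>Complex *-vector space: sc is the complex scalar multiplication, st the involution.\<close>
definition star_vs :: "(complex \<Rightarrow> 'v::ab_group_add \<Rightarrow> 'v) \<Rightarrow> ('v \<Rightarrow> 'v) \<Rightarrow> bool" where
  "star_vs sc st \<longleftrightarrow> vector_space sc \<and>
     (\<forall>x y. st (x + y) = st x + st y) \<and>
     (\<forall>c x. st (sc c x) = sc (cnj c) (st x)) \<and>
     (\<forall>x. st (st x) = x)"

definition madj :: "('v \<Rightarrow> 'v) \<Rightarrow> (nat \<Rightarrow> nat \<Rightarrow> 'v) \<Rightarrow> (nat \<Rightarrow> nat \<Rightarrow> 'v)" where
  "madj st A = (\<lambda>i j. st (A j i))"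

definition msa :: "('v::zero \<Rightarrow> 'v) \<Rightarrow> nat \<Rightarrow> (nat \<Rightarrow> nat \<Rightarrow> 'v) set" where
  "msa st n = {A \<in> sq n. madj st A = A}"

definition mtriple :: "(complex \<Rightarrow> 'v::ab_group_add \<Rightarrow> 'v) \<Rightarrow> nat \<Rightarrow> nat \<Rightarrow>
    (nat \<Rightarrow> nat \<Rightarrow> complex) \<Rightarrow> (nat \<Rightarrow> nat \<Rightarrow> 'v) \<Rightarrow> (nat \<Rightarrow> nat \<Rightarrow> complex) \<Rightarrow>
    (nat \<Rightarrow> nat \<Rightarrow> 'v)" where
  "mtriple sc n k L A R = (\<lambda>i j. if i < k \<and> j < k
       then (\<Sum>p<n. \<Sum>q<n. sc (L i p * R q j) (A p q)) else 0)"

definition dsum :: "nat \<Rightarrow> nat \<Rightarrow> (nat \<Rightarrow> nat \<Rightarrow> 'v::zero) \<Rightarrow> (nat \<Rightarrow> nat \<Rightarrow> 'v)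
    \<Rightarrow> (nat \<Rightarrow> nat \<Rightarrow> 'v)" where
  "dsum n k A B = (\<lambda>i j. if i < n \<and> j < n then A i j
       else if n \<le> i \<and> n \<le> j \<and> i < n + k \<and> j < n + k then B (i - n) (j - n) else 0)"

definition amp :: "('v \<Rightarrow> 'w) \<Rightarrow> (nat \<Rightarrow> nat \<Rightarrow> 'v) \<Rightarrow> (nat \<Rightarrow> nat \<Rightarrow> 'w)" where
  "amp \<phi> A = (\<lambda>i j. \<phi> (A i j))"

definition LinfMOS :: "(complex \<Rightarrow> 'v::ab_group_add \<Rightarrow> 'v) \<Rightarrow> ('v \<Rightarrow> 'v) \<Rightarrow>
    (nat \<Rightarrow> (nat \<Rightarrow> nat \<Rightarrow> 'v) \<Rightarrow> real) \<Rightarrow> bool" where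
  "LinfMOS sc st \<nu> \<longleftrightarrow> star_vs sc st \<and>
    (\<forall>n. \<forall>A\<in>msa st n. 0 \<le> \<nu> n A) \<and>
    (\<forall>n. \<forall>A\<in>msa st n. \<forall>B\<in>msa st n. \<nu> n (\<lambda>i j. A i j + B i j) \<le> \<nu> n A + \<nu> n B) \<and>
    (\<forall>n. \<forall>A\<in>msa st n. \<forall>t>0. \<nu> n (\<lambda>i j. sc (complex_of_real t) (A i j)) = t * \<nu> n A) \<and>
    (\<forall>n. \<forall>A\<in>msa st n. \<nu> n A = 0 \<and> \<nu> n (\<lambda>i j. - A i j) = 0 \<longrightarrow> (\<forall>i j. A i j = 0)) \<and>
    (\<forall>n k. \<forall>A\<in>msa st n. \<forall>X\<in>rect n k.
        \<nu> k (mtriple sc n k (cadj X) A X) \<le> (opnorm n k X)\<^sup>2 * \<nu> n A) \<and>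
    (\<forall>n k. \<forall>A\<in>msa st n. \<forall>B\<in>msa st k.
        \<nu> (n + k) (dsum n k A B) = max (\<nu> n A) (\<nu> k B))"

definition gauge_contractive where
  "gauge_contractive scV stV \<nu> scW stW \<omega> \<phi> \<longleftrightarrow> Vector_Spaces.linear scV scW \<phi> \<and>
     (\<forall>x. \<phi> (stV x) = stW (\<phi> x)) \<and>
     (\<forall>n. \<forall>A\<in>msa stV n. \<omega> n (amp \<phi> A) \<le> \<nu> n A)"

definition gauge_isometric where
  "gauge_isometric scV stV \<nu> scW stW \<omega> \<phi> \<longleftrightarrow> Vector_Spaces.linear scV scW \<phi> \<and>
     (\<forall>x. \<phi> (stV x) = stW (\<phi> x)) \<and>
     (\<forall>n. \<forall>A\<in>msa stV n. \<omega> n (amp \<phi> A) = \<nu> n A)"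

definition shiftm :: "nat \<Rightarrow> real \<Rightarrow> (nat \<Rightarrow> nat \<Rightarrow> complex) \<Rightarrow> (nat \<Rightarrow> nat \<Rightarrow> complex)" where
  "shiftm n t X = (\<lambda>i j. complex_of_real t * cid n i j - X i j)"

definition unorm :: "(complex \<Rightarrow> 'v::ab_group_add \<Rightarrow> 'v) \<Rightarrow>
    (nat \<Rightarrow> (nat \<Rightarrow> nat \<Rightarrow> 'v) \<Rightarrow> real) \<Rightarrow> nat \<Rightarrow>
    (nat \<Rightarrow> nat \<Rightarrow> 'v) \<Rightarrow> (nat \<Rightarrow> nat \<Rightarrow> complex) \<Rightarrow> ereal" where
  "unorm sc \<nu> n A X = Inf {ereal t | t. t > 0 \<and> posinv n (shiftm n t X) \<and>
      \<nu> n (mtriple sc n n (isqrt n (shiftm n t X)) A (isqrt n (shiftm n t X))) \<le> 1}"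

text \<open>Involution on V_1 = V x C and M_n(V_1) = M_n(V) + M_n (entries are pairs).\<close>
definition ust :: "('v \<Rightarrow> 'v) \<Rightarrow> 'v \<times> complex \<Rightarrow> 'v \<times> complex" where
  "ust st z = (st (fst z), cnj (snd z))"

definition upos :: "(complex \<Rightarrow> 'v::ab_group_add \<Rightarrow> 'v) \<Rightarrow> ('v \<Rightarrow> 'v) \<Rightarrow>
    (nat \<Rightarrow> (nat \<Rightarrow> nat \<Rightarrow> 'v) \<Rightarrow> real) \<Rightarrow> nat \<Rightarrow> (nat \<Rightarrow> nat \<Rightarrow> 'v \<times> complex) \<Rightarrow> bool" where
  "upos sc st \<nu> n Z \<longleftrightarrow> Z \<in> msa (ust st) n \<and>
     unorm sc \<nu> n (\<lambda>i j. - fst (Z i j)) (\<lambda>i j. - snd (Z i j)) = 0"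

definition unital_ext :: "('v \<Rightarrow> 'w) \<Rightarrow> 'v \<times> complex \<Rightarrow> 'w \<times> complex" where
  "unital_ext \<phi> z = (\<phi> (fst z), snd z)"

definition completely_positive where
  "completely_positive scV stV \<nu> scW stW \<omega> \<psi> \<longleftrightarrow>
     (\<forall>n Z. upos scV stV \<nu> n Z \<longrightarrow> upos scW stW \<omega> n (amp \<psi> Z))"

definition complete_order_embedding where
  "complete_order_embedding scV stV \<nu> scW stW \<omega> \<psi> \<longleftrightarrow> inj \<psi> \<and>
     (\<forall>n. \<forall>Z\<in>sq n. upos scW stW \<omega> n (amp \<psi> Z) \<longleftrightarrow> upos scV stV \<nu> n Z)"

end

theory Submission
  imports Defs "Jordan_Normal_Form.Schur_Decomposition"
begin


type_synonym cm = "nat \<Rightarrow> nat \<Rightarrow> complex"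

definition msc :: "complex \<Rightarrow> cm \<Rightarrow> cm" where "msc c A = (\<lambda>i j. c * A i j)"
definition madd :: "cm \<Rightarrow> cm \<Rightarrow> cm" where "madd A B = (\<lambda>i j. A i j + B i j)"
definition mdiff :: "cm \<Rightarrow> cm \<Rightarrow> cm" where "mdiff A B = (\<lambda>i j. A i j - B i j)"
definition mz :: cm where "mz = (\<lambda>i j. 0)"
lemma madd_app: "madd A B i j = A i j + B i j" by (simp add: madd_def)
lemma mdiff_app: "mdiff A B i j = A i j - B i j" by (simp add: mdiff_def)
lemma mz_app: "mz i j = 0" by (simp add: mz_def)
lemma msc_app: "msc c A i j = c * A i j" by (simp add: msc_def)

lemmas mapp = madd_app mdiff_app mz_app msc_app

lemma cmult_app: "cmult n A B i j = (\<Sum>l<n. A i l * B l j)" by (simp add: cmult_def)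

lemma cmult_assoc: "cmult n (cmult n A B) C = cmult n A (cmult n B C)"
  by (auto simp: cmult_def fun_eq_iff mapp sum_distrib_left sum_distrib_right mult.assoc intro: sum.swap)

lemma cmult_add_left: "cmult n (madd A B) C = madd (cmult n A C) (cmult n B C)"
  by (auto simp: cmult_def fun_eq_iff mapp distrib_right sum.distrib)
lemma cmult_add_right: "cmult n A (madd B C) = madd (cmult n A B) (cmult n A C)"
  by (auto simp: cmult_def fun_eq_iff mapp distrib_left sum.distrib)
lemma cmult_diff_left: "cmult n (mdiff A B) C = mdiff (cmult n A C) (cmult n B C)"
  by (auto simp: cmult_def fun_eq_iff mapp left_diff_distrib sum_subtractf)
lemma cmult_diff_right: "cmult n A (mdiff B C) = mdiff (cmult n A B) (cmult n A C)"
  by (auto simp: cmult_def fun_eq_iff mapp right_diff_distrib sum_subtractf)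
lemma cmult_msc_left: "cmult n (msc c A) B = msc c (cmult n A B)"
  by (auto simp: cmult_def fun_eq_iff mapp sum_distrib_left mult.assoc)
lemma cmult_msc_right: "cmult n A (msc c B) = msc c (cmult n A B)"
  by (auto simp: cmult_def fun_eq_iff mapp sum_distrib_left mult.left_commute)
lemma cmult_zero_left[simp]: "cmult n mz B = mz" by (auto simp: cmult_def fun_eq_iff mapp)
lemma cmult_zero_right[simp]: "cmult n A mz = mz" by (auto simp: cmult_def fun_eq_iff mapp)

lemma cid_sq[simp]: "cid n \<in> sq n" by (auto simp: rect_def mapp cid_def)
lemma cmult_sq[simp]: "A \<in> sq n \<Longrightarrow> B \<in> sq n \<Longrightarrow> cmult n A B \<in> sq n"
  by (auto simp: rect_def mapp cmult_def)
lemma add_sq[simp]: "A \<in> sq n \<Longrightarrow> B \<in> sq n \<Longrightarrow> madd A B \<in> sq n"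
  by (simp add: rect_def mapp)
lemma diff_sq[simp]: "A \<in> sq n \<Longrightarrow> B \<in> sq n \<Longrightarrow> mdiff A B \<in> sq n"
  by (simp add: rect_def mapp)
lemma msc_sq[simp]: "A \<in> sq n \<Longrightarrow> msc c A \<in> sq n"
  by (auto simp: rect_def mapp)
lemma zero_sq[simp]: "mz \<in> sq n" by (auto simp: rect_def mapp)

lemma ifmult1[simp]: "(if P then 1 else 0) * (x::complex) = (if P then x else 0)" by simp
lemma ifmult2[simp]: "(x::complex) * (if P then 1 else 0) = (if P then x else 0)" by simp

lemma cmult_cid_left: "A \<in> sq n \<Longrightarrow> cmult n (cid n) A = A"
proof -
  assume A: "A \<in> sq n"
  show ?thesis unfolding fun_eq_iff mapp cmult_def cid_def
  proof (intro allI)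
    fix i j
    show "(\<Sum>l<n. (if i = l \<and> i < n then 1 else 0) * A l j) = A i j"
      using A by (cases "i < n") (auto simp: rect_def mapp)
  qed
qed

lemma cmult_cid_right: "A \<in> sq n \<Longrightarrow> cmult n A (cid n) = A"
proof -
  assume A: "A \<in> sq n"
  show ?thesis unfolding fun_eq_iff mapp cmult_def cid_def
  proof (intro allI)
    fix i j
    show "(\<Sum>l<n. A i l * (if l = j \<and> l < n then 1 else 0)) = A i j"
      using A by (cases "j < n") (auto simp: rect_def mapp)
  qed
qed

lemma cadj_cmult: "cadj (cmult n A B) = cmult n (cadj B) (cadj A)"
  by (auto simp: cadj_def cmult_def fun_eq_iff mapp mult.commute)
lemma cadj_add: "cadj (madd A B) = madd (cadj A) (cadj B)" by (auto simp: cadj_def fun_eq_iff mapp)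
lemma cadj_diff: "cadj (mdiff A B) = mdiff (cadj A) (cadj B)" by (auto simp: cadj_def fun_eq_iff mapp)
lemma cadj_msc: "cadj (msc c A) = msc (cnj c) (cadj A)" by (auto simp: cadj_def fun_eq_iff mapp)
lemma cadj_cid[simp]: "cadj (cid n) = cid n" by (auto simp: cadj_def cid_def fun_eq_iff mapp)
lemma cadj_cadj[simp]: "cadj (cadj A) = A" by (auto simp: cadj_def fun_eq_iff mapp)
lemma cadj_zero[simp]: "cadj mz = mz" by (auto simp: cadj_def fun_eq_iff mapp)
lemma cadj_sq[simp]: "A \<in> sq n \<Longrightarrow> cadj A \<in> sq n" by (auto simp: cadj_def rect_def mapp)

lemma msc_0[simp]: "msc 0 A = mz" by (auto simp: fun_eq_iff mapp)
lemma msc_1[simp]: "msc 1 A = A" by (auto simp: fun_eq_iff mapp)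
lemma msc_zero[simp]: "msc c mz = mz" by (auto simp: fun_eq_iff mapp)
lemma madd_mz[simp]: "madd mz A = A" "madd A mz = A" by (auto simp: fun_eq_iff mapp)
lemma mdiff_mz[simp]: "mdiff A mz = A" by (auto simp: fun_eq_iff mapp)
lemma msc_add: "msc c (madd A B) = madd (msc c A) (msc c B)" by (auto simp: fun_eq_iff mapp algebra_simps)
lemma msc_add2: "msc (a + b) A = madd (msc a A) (msc b A)" by (auto simp: fun_eq_iff mapp algebra_simps)
lemma msc_diff: "msc c (mdiff A B) = mdiff (msc c A) (msc c B)" by (auto simp: fun_eq_iff mapp algebra_simps)
lemma msc_diff2: "msc (a - b) A = mdiff (msc a A) (msc b A)" by (auto simp: fun_eq_iff mapp algebra_simps)
lemma msc_msc: "msc a (msc b A) = msc (a * b) A" by (auto simp: fun_eq_iff mapp algebra_simps)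

definition peval :: "nat \<Rightarrow> complex poly \<Rightarrow> cm \<Rightarrow> cm" where
  "peval n p A = fold_coeffs (\<lambda>a M. madd (msc a (cid n)) (cmult n A M)) p mz"

lemma peval_0[simp]: "peval n 0 A = mz" by (simp add: peval_def)

lemma peval_pCons: "peval n (pCons a p) A = madd (msc a (cid n)) (cmult n A (peval n p A))"
proof (cases "p = 0 \<and> a = 0")
  case True then show ?thesis by simp
next
  case False
  then have "a \<noteq> 0 \<or> p \<noteq> 0" by auto
  then show ?thesis by (auto simp: peval_def)
qed

lemma peval_sq[simp]: "A \<in> sq n \<Longrightarrow> peval n p A \<in> sq n"
  by (induct p) (auto simp: peval_pCons)

lemma peval_add: "peval n (p + q) A = madd (peval n p A) (peval n q A)"
proof (induct p arbitrary: q)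
  case 0 then show ?case by simp
next
  case (pCons a p)
  show ?case
  proof (cases q)
    case (pCons b q')
    have h: "peval n (p + q') A = madd (peval n p A) (peval n q' A)" by (rule pCons.hyps)
    show ?thesis unfolding pCons by (simp add: peval_pCons h msc_add2 cmult_add_right) (simp add: fun_eq_iff mapp algebra_simps)
  qed
qed

lemma peval_diff: "peval n (p - q) A = mdiff (peval n p A) (peval n q A)"
proof (induct p arbitrary: q)
  case 0
  show ?case
  proof (induct q)
    case 0 then show ?case by (simp add: fun_eq_iff mapp)
  next
    case (pCons b q)
    then show ?case by (simp add: peval_pCons fun_eq_iff mapp cmult_def sum_negf)
  qed
next
  case (pCons a p)
  show ?case
  proof (cases q)
    case (pCons b q')
    have h: "peval n (p - q') A = mdiff (peval n p A) (peval n q' A)" by (rule pCons.hyps)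
    show ?thesis unfolding pCons by (simp add: peval_pCons h msc_diff2 cmult_diff_right) (simp add: fun_eq_iff mapp algebra_simps)
  qed
qed

lemma peval_smult: "peval n (smult c p) A = msc c (peval n p A)"
  by (induct p) (auto simp: peval_pCons msc_add msc_msc cmult_msc_right)

lemma peval_const: "peval n [:c:] A = msc c (cid n)"
  by (simp add: peval_pCons)

lemma peval_X: "A \<in> sq n \<Longrightarrow> peval n [:0, 1:] A = A"
  by (simp add: peval_pCons cmult_cid_right)

lemma peval_commute: "A \<in> sq n \<Longrightarrow> cmult n A (peval n p A) = cmult n (peval n p A) A"
proof (induct p)
  case 0 then show ?case by simp
next
  case (pCons a p)
  then show ?case
    by (simp add: peval_pCons cmult_add_left cmult_add_right cmult_msc_left
      cmult_msc_right cmult_cid_left cmult_cid_right) (metis cmult_assoc)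
qed

lemma peval_mult: "A \<in> sq n \<Longrightarrow> peval n (p * q) A = cmult n (peval n p A) (peval n q A)"
  by (induct p) (auto simp: peval_pCons peval_add peval_smult cmult_add_left cmult_msc_left
      cmult_cid_left cmult_assoc)

lemma peval_pcompose: "A \<in> sq n \<Longrightarrow> peval n (pcompose p q) A = peval n p (peval n q A)"
  by (induct p) (auto simp: pcompose_pCons peval_pCons peval_add peval_mult peval_const)

lemma peval_cnj: "A \<in> sq n \<Longrightarrow> cadj (peval n p A) = peval n (map_poly cnj p) (cadj A)"
proof (induct p)
  case 0 then show ?case by simp
next
  case (pCons a p)
  have "cadj (peval n (pCons a p) A) = madd (msc (cnj a) (cid n)) (cmult n (peval n (map_poly cnj p) (cadj A)) (cadj A))"
    using pCons by (simp add: peval_pCons cadj_add cadj_msc cadj_cmult)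
  also have "\<dots> = madd (msc (cnj a) (cid n)) (cmult n (cadj A) (peval n (map_poly cnj p) (cadj A)))"
    using peval_commute[of "cadj A" n "map_poly cnj p"] pCons by simp
  also have "\<dots> = peval n (map_poly cnj (pCons a p)) (cadj A)"
    using pCons by (auto simp: map_poly_pCons peval_pCons)
  finally show ?case .
qed

lemma peval_similar:
  assumes "A = cmult n (cmult n P B) Q" "cmult n Q P = cid n" "cmult n P Q = cid n"
    "P \<in> sq n" "Q \<in> sq n" "B \<in> sq n"
  shows "peval n p A = cmult n (cmult n P (peval n p B)) Q"
proof (induct p)
  case 0 then show ?case by simp
next
  case (pCons a p)
  have "cmult n A (cmult n (cmult n P (peval n p B)) Q) = cmult n (cmult n P (cmult n B (peval n p B))) Q"
    using assms by (simp add: cmult_assoc) (metis cmult_assoc cmult_cid_left peval_sq)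
  moreover have "msc a (cid n) = cmult n (cmult n P (msc a (cid n))) Q"
    using assms by (simp add: cmult_msc_right cmult_msc_left cmult_cid_right)
  ultimately show ?case using pCons
    by (simp add: peval_pCons cmult_add_right cmult_add_left)
qed



lemma peval_lin: "A \<in> sq n \<Longrightarrow> peval n [:c, 1:] A = madd (msc c (cid n)) A"
  by (simp add: peval_pCons cmult_cid_right)

lemma tri_CH_aux:
  assumes B: "B \<in> sq n" and tri: "\<And>i j. j < i \<Longrightarrow> B i j = 0"
  shows "k \<le> n \<Longrightarrow> j < k \<Longrightarrow> peval n (\<Prod>l<k. [:- B l l, 1:]) B i j = 0"
proof (induct k arbitrary: j)
  case 0 then show ?case by simp
next
  case (Suc k)
  let ?C = "peval n (\<Prod>l<k. [:- B l l, 1:]) B"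
  let ?D = "madd (msc (- B k k) (cid n)) B"
  have eq: "peval n (\<Prod>l<Suc k. [:- B l l, 1:]) B = cmult n ?C ?D"
    by (simp only: prod.lessThan_Suc peval_mult[OF B] peval_lin[OF B])
  have "(\<Sum>l<n. ?C i l * ?D l j) = 0"
  proof (rule sum.neutral, intro ballI)
    fix l assume l: "l \<in> {..<n}"
    show "?C i l * ?D l j = 0"
    proof (cases "l < k")
      case True then show ?thesis using Suc by simp
    next
      case False
      have "?D l j = 0"
      proof (cases "j < l")
        case True then show ?thesis using tri[of j l] by (simp add: mapp cid_def)
      next
        case False
        with \<open>\<not> l < k\<close> Suc.prems have "l = k" "j = k" by auto
        then show ?thesis using l by (simp add: mapp cid_def)
      qed
      then show ?thesis by simp
    qed
  qed
  then show ?case unfolding eq cmult_app .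
qed

lemma tri_CH:
  assumes B: "B \<in> sq n" and tri: "\<And>i j. j < i \<Longrightarrow> B i j = 0"
  shows "peval n (\<Prod>l<n. [:- B l l, 1:]) B = mz"
proof -
  have sqC: "peval n (\<Prod>l<n. [:- B l l, 1:]) B \<in> sq n" using B by simp
  show ?thesis
  proof (rule ext, rule ext)
    fix i j
    show "peval n (\<Prod>l<n. [:- B l l, 1:]) B i j = mz i j"
    proof (cases "j < n")
      case True then show ?thesis using tri_CH_aux[OF B tri, of n j i] by (simp add: mapp)
    next
      case False then show ?thesis using sqC by (simp add: rect_def mapp)
    qed
  qed
qed

definition tofun :: "complex mat \<Rightarrow> cm" where
  "tofun M = (\<lambda>i j. if i < dim_row M \<and> j < dim_col M then M $$ (i, j) else 0)"

lemma tofun_sq: "M \<in> carrier_mat n n \<Longrightarrow> tofun M \<in> sq n"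
  by (auto simp: tofun_def rect_def)

lemma tofun_mult: assumes "M \<in> carrier_mat n n" "N \<in> carrier_mat n n"
  shows "tofun (M * N) = cmult n (tofun M) (tofun N)"
proof (rule ext, rule ext)
  fix i j
  show "tofun (M * N) i j = cmult n (tofun M) (tofun N) i j"
  proof (cases "i < n \<and> j < n")
    case True
    then show ?thesis using assms
      by (auto simp: tofun_def cmult_def index_mult_mat scalar_prod_def atLeast0LessThan intro!: sum.cong)
  next
    case False
    then show ?thesis using assms by (auto simp: tofun_def cmult_def)
  qed
qed

lemma tofun_one: "tofun (1\<^sub>m n) = cid n"
  by (auto simp: tofun_def cid_def fun_eq_iff)

lemma tofun_mat: "A \<in> sq n \<Longrightarrow> tofun (mat n n (\<lambda>(i, j). A i j)) = A"
  by (auto simp: tofun_def rect_def fun_eq_iff)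

definition is_ev :: "nat \<Rightarrow> cm \<Rightarrow> complex \<Rightarrow> bool" where
  "is_ev n A e \<longleftrightarrow> (\<exists>v. (\<exists>i<n. v i \<noteq> 0) \<and> (\<forall>i<n. (\<Sum>j<n. A i j * v j) = e * v i))"

lemma eigenvalue_is_ev:
  assumes A: "A \<in> sq n"
  shows "eigenvalue (mat n n (\<lambda>(i, j). A i j)) e \<longleftrightarrow> is_ev n A e"
proof
  assume "eigenvalue (mat n n (\<lambda>(i, j). A i j)) e"
  then obtain v where v: "v \<in> carrier_vec n" "v \<noteq> 0\<^sub>v n"
    "mat n n (\<lambda>(i, j). A i j) *\<^sub>v v = e \<cdot>\<^sub>v v"
    by (auto simp: eigenvalue_def eigenvector_def)
  have "\<exists>i<n. v $ i \<noteq> 0"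
  proof (rule ccontr)
    assume "\<not> ?thesis"
    then have "v = 0\<^sub>v n" using v(1) by (intro eq_vecI) auto
    with v(2) show False by simp
  qed
  moreover have "\<forall>i<n. (\<Sum>j<n. A i j * v $ j) = e * v $ i"
  proof (intro allI impI)
    fix i assume i: "i < n"
    have "(mat n n (\<lambda>(i, j). A i j) *\<^sub>v v) $ i = (e \<cdot>\<^sub>v v) $ i" using v(3) by simp
    then show "(\<Sum>j<n. A i j * v $ j) = e * v $ i"
      using i v(1) by (simp add: scalar_prod_def atLeast0LessThan)
  qed
  ultimately show "is_ev n A e" unfolding is_ev_def by blast
next
  assume "is_ev n A e"
  then obtain v where v: "\<exists>i<n. v i \<noteq> 0" "\<forall>i<n. (\<Sum>j<n. A i j * v j) = e * v i"
    unfolding is_ev_def by blast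
  let ?v = "vec n v"
  have "eigenvector (mat n n (\<lambda>(i, j). A i j)) ?v e"
    unfolding eigenvector_def
  proof (intro conjI)
    show "?v \<in> carrier_vec (dim_row (mat n n (\<lambda>(i, j). A i j)))" by simp
    show "?v \<noteq> 0\<^sub>v (dim_row (mat n n (\<lambda>(i, j). A i j)))"
      using v(1) by (auto simp: vec_eq_iff)
    show "mat n n (\<lambda>(i, j). A i j) *\<^sub>v ?v = e \<cdot>\<^sub>v ?v"
      using v(2) by (auto simp: scalar_prod_def atLeast0LessThan intro!: eq_vecI)
  qed
  then show "eigenvalue (mat n n (\<lambda>(i, j). A i j)) e" unfolding eigenvalue_def by blast
qed

lemma CH:
  assumes A: "A \<in> sq n"
  shows "\<exists>es. (\<forall>e. e \<in> set es \<longleftrightarrow> is_ev n A e) \<and> peval n (\<Prod>e\<leftarrow>es. [:- e, 1:]) A = mz"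
proof -
  define M where "M = mat n n (\<lambda>(i, j). A i j)"
  have M: "M \<in> carrier_mat n n" by (simp add: M_def)
  obtain es where es: "char_poly M = (\<Prod>a\<leftarrow>es. [:- a, 1:])"
    using char_poly_factorized[OF M] by blast
  obtain B P Q where sd: "schur_decomposition M es = (B, P, Q)" by (cases "schur_decomposition M es") auto
  from schur_decomposition[OF M es sd] have sim: "similar_mat_wit M B P Q" and ut: "upper_triangular B"
    and dg: "diag_mat B = es" by auto
  from sim M have car: "B \<in> carrier_mat n n" "P \<in> carrier_mat n n" "Q \<in> carrier_mat n n"
    and PQ: "P * Q = 1\<^sub>m n" "Q * P = 1\<^sub>m n" and MPBQ: "M = P * B * Q"
    by (auto simp: similar_mat_wit_def Let_def)
  have Aeq: "A = cmult n (cmult n (tofun P) (tofun B)) (tofun Q)"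
  proof -
    have "A = tofun M" using A by (simp add: M_def tofun_mat)
    also have "\<dots> = tofun (P * B * Q)" using MPBQ by simp
    also have "\<dots> = cmult n (cmult n (tofun P) (tofun B)) (tofun Q)"
      using car by (simp add: tofun_mult cmult_assoc)
    finally show ?thesis .
  qed
  have QP: "cmult n (tofun Q) (tofun P) = cid n" using car PQ by (simp add: tofun_mult[symmetric] tofun_one)
  have PQ': "cmult n (tofun P) (tofun Q) = cid n" using car PQ by (simp add: tofun_mult[symmetric] tofun_one)
  have sqs: "tofun P \<in> sq n" "tofun Q \<in> sq n" "tofun B \<in> sq n" using car by (auto intro: tofun_sq)
  have tri: "\<And>i j. j < i \<Longrightarrow> tofun B i j = 0"
    using ut car unfolding upper_triangular_def tofun_def by auto
  have prodeq: "(\<Prod>e\<leftarrow>es. [:- e, 1:]) = (\<Prod>l<n. [:- tofun B l l, 1:])"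
  proof -
    have "(\<Prod>e\<leftarrow>es. [:- e, 1:]) = (\<Prod>l\<leftarrow>[0..<n]. [:- B $$ (l, l), 1:])"
      using car by (simp add: dg[symmetric] diag_mat_def comp_def)
    also have "\<dots> = (\<Prod>l\<in>set [0..<n]. [:- B $$ (l, l), 1:])"
      by (rule prod.distinct_set_conv_list[symmetric]) simp
    also have "\<dots> = (\<Prod>l<n. [:- tofun B l l, 1:])"
      using car by (auto simp: tofun_def atLeast0LessThan intro!: prod.cong)
    finally show ?thesis .
  qed
  have "peval n (\<Prod>e\<leftarrow>es. [:- e, 1:]) A = cmult n (cmult n (tofun P) (peval n (\<Prod>e\<leftarrow>es. [:- e, 1:]) (tofun B))) (tofun Q)"
    by (rule peval_similar[OF Aeq QP PQ' sqs])
  also have "\<dots> = mz" unfolding prodeq using tri_CH[OF sqs(3) tri] by simp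
  finally have z: "peval n (\<Prod>e\<leftarrow>es. [:- e, 1:]) A = mz" .
  have "\<forall>e. e \<in> set es \<longleftrightarrow> is_ev n A e"
  proof
    fix e
    have "e \<in> set es \<longleftrightarrow> poly (char_poly M) e = 0"
      unfolding es poly_prod_list_zero_iff by auto
    also have "\<dots> \<longleftrightarrow> eigenvalue M e" using eigenvalue_root_char_poly[OF M] by simp
    also have "\<dots> \<longleftrightarrow> is_ev n A e" unfolding M_def by (rule eigenvalue_is_ev[OF A])
    finally show "e \<in> set es \<longleftrightarrow> is_ev n A e" .
  qed
  with z show ?thesis by blast
qed



lemma cnj_mult_self: "cnj z * z = complex_of_real ((cmod z)\<^sup>2)"
  by (subst complex_norm_square) (rule mult.commute)

lemma sum_cnj_zero:
  fixes n l :: nat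
  assumes "(\<Sum>l<n. cnj (f l) * f l) = 0" "l < n"
  shows "f l = 0"
proof -
  have "(\<Sum>l<n. complex_of_real ((cmod (f l))\<^sup>2)) = 0" using assms(1) by (simp add: cnj_mult_self)
  then have "complex_of_real (\<Sum>l<n. (cmod (f l))\<^sup>2) = 0" by simp
  then have "(\<Sum>l<n. (cmod (f l))\<^sup>2) = 0" by (simp only: of_real_eq_0_iff)
  then have "(cmod (f l))\<^sup>2 = 0" using assms(2) by (subst (asm) sum_nonneg_eq_0_iff) auto
  then show ?thesis by simp
qed

lemma herm_sq_zero:
  assumes T: "T \<in> sq n" "cadj T = T" and z: "cmult n T (cmult n T M) = mz"
  shows "cmult n T M = mz"
proof -
  let ?N = "cmult n T M"
  have "cmult n (cadj ?N) ?N = cmult n (cadj M) (cmult n T (cmult n T M))"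
    using T by (simp add: cadj_cmult cmult_assoc)
  also have "\<dots> = mz" using z by simp
  finally have h: "cmult n (cadj ?N) ?N = mz" .
  show ?thesis
  proof (rule ext, rule ext)
    fix l j
    show "?N l j = mz l j"
    proof (cases "l < n")
      case True
      have "(\<Sum>k<n. cnj (?N k j) * ?N k j) = 0"
        using fun_cong[OF fun_cong[OF h, of j], of j] by (simp add: cmult_app cadj_def mz_app)
      from sum_cnj_zero[OF this True] show ?thesis by (simp add: mz_app)
    next
      case False
      then show ?thesis using T(1) by (simp add: cmult_app rect_def mz_app)
    qed
  qed
qed

lemma prod_roots_dvd:
  fixes g :: "complex poly"
  assumes "finite F" "\<forall>x\<in>F. poly g x = 0"
  shows "(\<Prod>x\<in>F. [:- x, 1:]) dvd g"
  using assms
proof (induct F rule: finite_induct)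
  case empty then show ?case by simp
next
  case (insert a F)
  then obtain r where r: "g = (\<Prod>x\<in>F. [:- x, 1:]) * r" by (auto elim: dvdE)
  have "poly (\<Prod>x\<in>F. [:- x, 1:]) a \<noteq> 0" using insert(2)
    by (auto simp: poly_prod prod_zero_iff[OF insert(1)])
  moreover have "poly g a = 0" using insert by simp
  ultimately have "poly r a = 0" using r by simp
  then obtain r' where r': "r = [:- a, 1:] * r'" by (auto simp: poly_eq_0_iff_dvd elim: dvdE)
  have "g = (\<Prod>x\<in>insert a F. [:- x, 1:]) * r'"
    unfolding r r' prod.insert[OF insert(1,2)] by (simp only: mult_ac)
  then show ?case by auto
qed

lemma dedupe:
  assumes H: "H \<in> sq n" "cadj H = H" and re: "\<forall>e\<in>set es. cnj e = e"
  shows "peval n ((\<Prod>e\<leftarrow>es. [:- e, 1:]) * q) H = mz \<Longrightarrow> peval n ((\<Prod>e\<in>set es. [:- e, 1:]) * q) H = mz"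
  using re
proof (induct es arbitrary: q)
  case Nil then show ?case by simp
next
  case (Cons e rest)
  have "(\<Prod>x\<leftarrow>e # rest. [:- x, 1:]) * q = (\<Prod>x\<leftarrow>rest. [:- x, 1:]) * ([:- e, 1:] * q)"
    by (simp only: list.map prod_list.Cons mult_ac)
  then have IH: "peval n ((\<Prod>e\<in>set rest. [:- e, 1:]) * ([:- e, 1:] * q)) H = mz"
    using Cons.hyps[of "[:- e, 1:] * q"] Cons.prems by simp
  show ?case
  proof (cases "e \<in> set rest")
    case False
    then have "(\<Prod>x\<in>set (e # rest). [:- x, 1:]) = [:- e, 1:] * (\<Prod>x\<in>set rest. [:- x, 1:])"
      by simp
    then show ?thesis using IH by (simp only: mult_ac)
  next
    case True
    let ?R = "(\<Prod>x\<in>set rest - {e}. [:- x, 1:])"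
    have pr: "(\<Prod>x\<in>set rest. [:- x, 1:]) = [:- e, 1:] * ?R"
      using True by (simp add: prod.remove)
    let ?T = "peval n [:- e, 1:] H"
    have T: "?T \<in> sq n" "cadj ?T = ?T"
      using H Cons.prems by (auto simp: peval_lin cadj_add cadj_msc)
    have "(\<Prod>e\<in>set rest. [:- e, 1:]) * ([:- e, 1:] * q) = [:- e, 1:] * ([:- e, 1:] * (?R * q))"
      unfolding pr by (simp only: mult_ac)
    then have "cmult n ?T (cmult n ?T (peval n (?R * q) H)) = mz"
      using IH H by (simp only: peval_mult peval_sq)
    then have "cmult n ?T (peval n (?R * q) H) = mz" by (rule herm_sq_zero[OF T])
    then have "peval n ((\<Prod>x\<in>set rest. [:- x, 1:]) * q) H = mz"
      unfolding pr using H by (simp only: peval_mult peval_sq mult.assoc)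
    then show ?thesis using True by (simp add: insert_absorb)
  qed
qed

lemma vanish:
  assumes H: "H \<in> sq n" "cadj H = H" and re: "\<forall>e\<in>set es. cnj e = e"
    and z: "peval n (\<Prod>e\<leftarrow>es. [:- e, 1:]) H = mz"
    and g: "\<forall>e\<in>set es. poly g e = 0"
  shows "peval n g H = mz"
proof -
  have "peval n ((\<Prod>e\<in>set es. [:- e, 1:]) * 1) H = mz"
    by (rule dedupe[OF H re]) (simp add: z)
  then have m: "peval n (\<Prod>e\<in>set es. [:- e, 1:]) H = mz" by simp
  obtain r where "g = (\<Prod>e\<in>set es. [:- e, 1:]) * r"
    using prod_roots_dvd[OF _ g] by (auto elim: dvdE)
  then show ?thesis using m H by (simp add: peval_mult)
qed

definition qf :: "nat \<Rightarrow> cm \<Rightarrow> (nat \<Rightarrow> complex) \<Rightarrow> complex" where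
  "qf n A v = (\<Sum>i<n. \<Sum>j<n. cnj (v i) * A i j * v j)"

lemma cpos_qf: "cpos n A \<longleftrightarrow> A \<in> sq n \<and> (\<forall>v. Im (qf n A v) = 0 \<and> 0 \<le> Re (qf n A v))"
  by (simp add: cpos_def qf_def)

lemma ev_nonneg:
  assumes c: "cpos n A" and ev: "is_ev n A e"
  shows "cnj e = e \<and> 0 \<le> Re e"
proof -
  obtain v where v: "\<exists>i<n. v i \<noteq> 0" "\<forall>i<n. (\<Sum>j<n. A i j * v j) = e * v i"
    using ev unfolding is_ev_def by blast
  have "qf n A v = (\<Sum>i<n. cnj (v i) * (\<Sum>j<n. A i j * v j))"
    by (simp add: qf_def sum_distrib_left mult.assoc)
  also have "\<dots> = (\<Sum>i<n. e * (cnj (v i) * v i))"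
    using v(2) by (auto intro!: sum.cong simp: mult_ac)
  also have "\<dots> = e * complex_of_real (\<Sum>i<n. (cmod (v i))\<^sup>2)"
    by (simp add: sum_distrib_left cnj_mult_self)
  finally have q: "qf n A v = e * complex_of_real (\<Sum>i<n. (cmod (v i))\<^sup>2)" .
  obtain i where i: "i < n" "v i \<noteq> 0" using v(1) by blast
  have "0 < (cmod (v i))\<^sup>2" using i by simp
  also have "\<dots> \<le> (\<Sum>i<n. (cmod (v i))\<^sup>2)"
    using i by (intro member_le_sum) auto
  finally have s: "0 < (\<Sum>i<n. (cmod (v i))\<^sup>2)" .
  have "Im (qf n A v) = 0" "0 \<le> Re (qf n A v)" using c unfolding cpos_qf by auto
  then have "Im e * (\<Sum>i<n. (cmod (v i))\<^sup>2) = 0" "0 \<le> Re e * (\<Sum>i<n. (cmod (v i))\<^sup>2)"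
    unfolding q by auto
  then have "Im e = 0" "0 \<le> Re e" using s by (auto simp: zero_le_mult_iff)
  then show ?thesis by (simp add: complex_eq_iff)
qed



lemma qf_two:
  assumes "i < n" "j < n" "i \<noteq> j" "\<And>k. k \<noteq> i \<Longrightarrow> k \<noteq> j \<Longrightarrow> v k = 0"
  shows "qf n A v = cnj (v i) * A i i * v i + cnj (v i) * A i j * v j + cnj (v j) * A j i * v i + cnj (v j) * A j j * v j"
proof -
  have sub: "{i, j} \<subseteq> {..<n}" using assms by auto
  have inner: "(\<Sum>l<n. cnj (v k) * A k l * v l) = (\<Sum>l\<in>{i, j}. cnj (v k) * A k l * v l)" for k
    by (rule sum.mono_neutral_right) (use sub assms(4) in auto)
  have "qf n A v = (\<Sum>k<n. \<Sum>l\<in>{i, j}. cnj (v k) * A k l * v l)"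
    unfolding qf_def inner ..
  also have "\<dots> = (\<Sum>k\<in>{i, j}. \<Sum>l\<in>{i, j}. cnj (v k) * A k l * v l)"
    by (rule sum.mono_neutral_right) (use sub assms(4) in auto)
  finally show ?thesis using assms(3) by simp
qed

lemma qf_one:
  assumes "i < n" "\<And>k. k \<noteq> i \<Longrightarrow> v k = 0"
  shows "qf n A v = cnj (v i) * A i i * v i"
proof -
  have sub: "{i} \<subseteq> {..<n}" using assms by auto
  have inner: "(\<Sum>l<n. cnj (v k) * A k l * v l) = (\<Sum>l\<in>{i}. cnj (v k) * A k l * v l)" for k
    by (rule sum.mono_neutral_right) (use sub assms(2) in auto)
  have "qf n A v = (\<Sum>k<n. \<Sum>l\<in>{i}. cnj (v k) * A k l * v l)"
    unfolding qf_def inner ..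
  also have "\<dots> = (\<Sum>k\<in>{i}. \<Sum>l\<in>{i}. cnj (v k) * A k l * v l)"
    by (rule sum.mono_neutral_right) (use sub assms(2) in auto)
  finally show ?thesis by simp
qed

lemma cpos_herm:
  assumes c: "cpos n A"
  shows "cadj A = A"
proof -
  have sq: "A \<in> sq n" and q: "\<And>v. Im (qf n A v) = 0" using c unfolding cpos_qf by auto
  have diag: "Im (A i i) = 0" if "i < n" for i
    using q[of "\<lambda>k. if k = i then 1 else 0"] qf_one[OF that, of "\<lambda>k. if k = i then 1 else 0" A] by simp
  have off: "A j i = cnj (A i j)" if "i < n" "j < n" "i \<noteq> j" for i j
  proof -
    have h1: "Im (A i i + A i j + A j i + A j j) = 0"
      using q[of "\<lambda>k. if k = i then 1 else if k = j then 1 else 0"]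
        qf_two[OF that, of "\<lambda>k. if k = i then 1 else if k = j then 1 else 0" A] that by simp
    have h2: "Im (A i i + A i j * \<i> + (- \<i>) * A j i + A j j) = 0"
      using q[of "\<lambda>k. if k = i then 1 else if k = j then \<i> else 0"]
        qf_two[OF that, of "\<lambda>k. if k = i then 1 else if k = j then \<i> else 0" A] that
      by (simp add: mult_ac)
    have "Im (A i j) + Im (A j i) = 0" using h1 diag that by simp
    moreover have "Re (A i j) - Re (A j i) = 0" using h2 diag that by simp
    ultimately show ?thesis by (simp add: complex_eq_iff)
  qed
  show ?thesis
  proof (rule ext, rule ext)
    fix i j
    show "cadj A i j = A i j"
    proof (cases "i < n \<and> j < n")
      case True
      show ?thesis
      proof (cases "i = j")
        case True then show ?thesis using diag \<open>i < n \<and> j < n\<close> by (simp add: cadj_def complex_eq_iff)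
      next
        case False then show ?thesis using off[of i j] \<open>i < n \<and> j < n\<close> by (simp add: cadj_def)
      qed
    next
      case False then show ?thesis using sq by (auto simp: cadj_def rect_def)
    qed
  qed
qed

lemma interp:
  fixes f :: "complex \<Rightarrow> complex"
  assumes "finite F"
  shows "\<exists>p. \<forall>x\<in>F. poly p x = f x"
  using assms
proof (induct F rule: finite_induct)
  case empty then show ?case by simp
next
  case (insert a F)
  then obtain p where p: "\<forall>x\<in>F. poly p x = f x" by blast
  let ?q = "\<Prod>x\<in>F. [:- x, 1:]"
  have qa: "poly ?q a \<noteq> 0" using insert(1,2) by (auto simp: poly_prod prod_zero_iff)
  have qx: "poly ?q x = 0" if "x \<in> F" for x using insert(1) that by (auto simp: poly_prod prod_zero_iff)
  let ?p = "p + smult ((f a - poly p a) / poly ?q a) ?q"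
  have "\<forall>x\<in>insert a F. poly ?p x = f x" using p qa qx by auto
  then show ?case by blast
qed

lemma mv_cmult: "(\<Sum>j<n. cmult n A B i j * v j) = (\<Sum>l<n. A i l * (\<Sum>j<n. B l j * v j))"
  by (simp add: cmult_app sum_distrib_left sum_distrib_right mult.assoc) (rule sum.swap)

lemma qf_adj_mult: "qf n (cmult n (cadj T) T) v = (\<Sum>l<n. cnj (\<Sum>j<n. T l j * v j) * (\<Sum>j<n. T l j * v j))"
proof -
  have "qf n (cmult n (cadj T) T) v = (\<Sum>i<n. \<Sum>j<n. \<Sum>l<n. cnj (T l i * v i) * (T l j * v j))"
    by (simp add: qf_def cmult_app cadj_def sum_distrib_left sum_distrib_right mult_ac)
  also have "\<dots> = (\<Sum>i<n. \<Sum>l<n. \<Sum>j<n. cnj (T l i * v i) * (T l j * v j))"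
    by (rule sum.cong[OF refl], rule sum.swap)
  also have "\<dots> = (\<Sum>l<n. \<Sum>i<n. \<Sum>j<n. cnj (T l i * v i) * (T l j * v j))"
    by (rule sum.swap)
  also have "\<dots> = (\<Sum>l<n. cnj (\<Sum>j<n. T l j * v j) * (\<Sum>j<n. T l j * v j))"
    by (simp add: sum_distrib_left sum_distrib_right cnj_sum) (rule sum.cong[OF refl], rule sum.swap)
  finally show ?thesis .
qed

lemma cpos_adj_mult: assumes "T \<in> sq n" shows "cpos n (cmult n (cadj T) T)"
  unfolding cpos_qf
proof (intro conjI allI)
  show "cmult n (cadj T) T \<in> sq n" using assms by simp
  fix v
  have e: "qf n (cmult n (cadj T) T) v = complex_of_real (\<Sum>l<n. (cmod (\<Sum>j<n. T l j * v j))\<^sup>2)"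
    unfolding qf_adj_mult cnj_mult_self by simp
  show "Im (qf n (cmult n (cadj T) T) v) = 0" unfolding e by (simp only: Im_complex_of_real)
  show "0 \<le> Re (qf n (cmult n (cadj T) T) v)" unfolding e Re_complex_of_real by (simp add: sum_nonneg)
qed



lemma peval_sqr: "A \<in> sq n \<Longrightarrow> peval n [:0, 0, 1:] A = cmult n A A"
proof -
  assume A: "A \<in> sq n"
  have "[:0, 0, 1:] = [:0, 1:] * [:0, 1 :: complex:]" by simp
  then show ?thesis using A by (simp only: peval_mult peval_X)
qed

lemma real_cx: "cnj e = e \<Longrightarrow> e = complex_of_real (Re e)"
  by (simp add: complex_eq_iff)

lemma psd_sqrt:
  assumes H: "H \<in> sq n" "cadj H = H"
    and evs: "\<And>e. is_ev n H e \<Longrightarrow> cnj e = e \<and> 0 \<le> Re e"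
  shows "\<exists>S. cpos n S \<and> cmult n S S = H \<and> (\<forall>S'. cpos n S' \<and> cmult n S' S' = H \<longrightarrow> S' = S)"
proof -
  obtain es where es: "\<forall>e. e \<in> set es \<longleftrightarrow> is_ev n H e" and z: "peval n (\<Prod>e\<leftarrow>es. [:- e, 1:]) H = mz"
    using CH[OF H(1)] by blast
  have re: "\<forall>e\<in>set es. cnj e = e" and nn: "\<forall>e\<in>set es. 0 \<le> Re e" using es evs by auto
  obtain h where h: "\<forall>x\<in>set es. poly h x = complex_of_real (sqrt (sqrt (Re x)))"
    using interp[of "set es" "\<lambda>x. complex_of_real (sqrt (sqrt (Re x)))"] by auto
  define k where "k = map_poly cnj h * h"
  define T where "T = peval n h H"
  define S where "S = peval n k H"
  have T: "T \<in> sq n" using H by (simp add: T_def)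
  have SeT: "S = cmult n (cadj T) T"
    using H by (simp add: S_def k_def T_def peval_mult peval_cnj)
  have cS: "cpos n S" unfolding SeT by (rule cpos_adj_mult[OF T])
  have polyk: "poly k x = complex_of_real (sqrt (Re x))" if "x \<in> set es" for x
  proof -
    have "poly k x = cnj (poly h (cnj x)) * poly h x" by (simp add: k_def)
    also have "\<dots> = complex_of_real (sqrt (sqrt (Re x)) * sqrt (sqrt (Re x)))"
      using h re that by (simp del: of_real_mult add: of_real_mult[symmetric])
    also have "sqrt (sqrt (Re x)) * sqrt (sqrt (Re x)) = sqrt (Re x)"
      using nn that by simp
    finally show ?thesis .
  qed
  have SS: "cmult n S S = H"
  proof -
    have "\<forall>e\<in>set es. poly (k * k - [:0, 1:]) e = 0"
    proof
      fix e assume e: "e \<in> set es"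
      have "poly (k * k - [:0, 1:]) e = complex_of_real (sqrt (Re e) * sqrt (Re e)) - e"
        using polyk[OF e] by (simp del: of_real_mult add: of_real_mult[symmetric])
      also have "\<dots> = complex_of_real (Re e) - e" using nn e by simp
      also have "\<dots> = 0" using real_cx[of e] re e by simp
      finally show "poly (k * k - [:0, 1:]) e = 0" .
    qed
    from vanish[OF H re z this] have "mdiff (cmult n S S) H = mz"
      using H by (simp add: peval_diff peval_mult peval_X S_def)
    then show ?thesis by (auto simp: fun_eq_iff mapp)
  qed
  have uniq: "S' = S" if S': "cpos n S'" "cmult n S' S' = H" for S'
  proof -
    have sqS': "S' \<in> sq n" using S' by (simp add: cpos_def)
    have hS': "cadj S' = S'" using cpos_herm[OF S'(1)] .
    obtain es' where es': "\<forall>e. e \<in> set es' \<longleftrightarrow> is_ev n S' e" and z': "peval n (\<Prod>e\<leftarrow>es'. [:- e, 1:]) S' = mz"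
      using CH[OF sqS'] by blast
    have re': "\<forall>e\<in>set es'. cnj e = e" using es' ev_nonneg[OF S'(1)] by auto
    define g where "g = pcompose k [:0, 0, 1:] - [:0, 1:]"
    have "\<forall>\<mu>\<in>set es'. poly g \<mu> = 0"
    proof
      fix \<mu> assume \<mu>: "\<mu> \<in> set es'"
      then have ev: "is_ev n S' \<mu>" using es' by auto
      have mr: "cnj \<mu> = \<mu>" "0 \<le> Re \<mu>" using ev_nonneg[OF S'(1) ev] by auto
      obtain v where v: "\<exists>i<n. v i \<noteq> 0" "\<forall>i<n. (\<Sum>j<n. S' i j * v j) = \<mu> * v i"
        using ev unfolding is_ev_def by blast
      have "is_ev n H (\<mu> * \<mu>)"
        unfolding is_ev_def
      proof (rule exI[of _ v], intro conjI allI impI)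
        show "\<exists>i<n. v i \<noteq> 0" by fact
        fix i assume i: "i < n"
        have "(\<Sum>j<n. H i j * v j) = (\<Sum>l<n. S' i l * (\<Sum>j<n. S' l j * v j))"
          unfolding S'(2)[symmetric] by (rule mv_cmult)
        also have "\<dots> = (\<Sum>l<n. S' i l * (\<mu> * v l))" using v(2) by (auto intro!: sum.cong)
        also have "\<dots> = \<mu> * (\<Sum>l<n. S' i l * v l)" by (simp add: sum_distrib_left mult_ac)
        also have "\<dots> = \<mu> * \<mu> * v i" using v(2) i by simp
        finally show "(\<Sum>j<n. H i j * v j) = \<mu> * \<mu> * v i" .
      qed
      then have mm: "\<mu> * \<mu> \<in> set es" using es by auto
      have "Re (\<mu> * \<mu>) = Re \<mu> * Re \<mu>" using mr real_cx[of \<mu>]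
        by (metis Re_complex_of_real of_real_mult)
      then have "poly k (\<mu> * \<mu>) = complex_of_real (Re \<mu>)"
        using polyk[OF mm] mr by (simp add: real_sqrt_mult)
      then show "poly g \<mu> = 0" using real_cx[of \<mu>] mr by (simp add: g_def poly_pcompose)
    qed
    from vanish[OF sqS' hS' re' z' this]
    have "peval n (pcompose k [:0, 0, 1:]) S' = peval n [:0, 1:] S'"
      by (auto simp: g_def peval_diff fun_eq_iff mapp)
    then have "peval n k (cmult n S' S') = S'"
      using sqS' by (simp add: peval_pcompose peval_sqr peval_X)
    then show ?thesis using S'(2) by (simp add: S_def)
  qed
  show ?thesis using cS SS uniq by blast
qed

lemma isqrt_herm:
  assumes P: "posinv n Y"
  shows "cpos n (isqrt n Y) \<and> cadj (isqrt n Y) = isqrt n Y"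
proof -
  obtain Z where Z: "Z \<in> sq n" "cmult n Y Z = cid n" "cmult n Z Y = cid n" and cY: "cpos n Y"
    using P unfolding posinv_def by blast
  have sqY: "Y \<in> sq n" using cY by (simp add: cpos_def)
  have hY: "cadj Y = Y" by (rule cpos_herm[OF cY])
  have hZ: "cadj Z = Z"
  proof -
    have c: "cmult n (cadj Z) (cadj Y) = cid n" using Z(2) by (metis cadj_cmult cadj_cid)
    have "cadj Z = cmult n (cadj Z) (cmult n Y Z)" using Z by (simp add: cmult_cid_right)
    also have "\<dots> = cmult n (cmult n (cadj Z) (cadj Y)) Z" using hY by (simp add: cmult_assoc)
    also have "\<dots> = Z" using Z by (simp add: c cmult_cid_left)
    finally show ?thesis .
  qed
  have evZ: "cnj e = e \<and> 0 \<le> Re e" if ev: "is_ev n Z e" for e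
  proof -
    obtain v where v: "\<exists>i<n. v i \<noteq> 0" "\<forall>i<n. (\<Sum>j<n. Z i j * v j) = e * v i"
      using ev unfolding is_ev_def by blast
    have hback: "v i = e * (\<Sum>l<n. Y i l * v l)" if hi: "i < n" for i
    proof -
      have "v i = (\<Sum>j<n. cid n i j * v j)"
        using hi by (simp add: cid_def)
      also have "\<dots> = (\<Sum>l<n. Y i l * (\<Sum>j<n. Z l j * v j))"
        unfolding Z(2)[symmetric] by (rule mv_cmult)
      also have "\<dots> = (\<Sum>l<n. Y i l * (e * v l))" using v(2) by (auto intro!: sum.cong)
      also have "\<dots> = e * (\<Sum>l<n. Y i l * v l)" by (simp add: sum_distrib_left mult_ac)
      finally show "v i = e * (\<Sum>l<n. Y i l * v l)" .
    qed
    have e0: "e \<noteq> 0" using v(1) hback by auto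
    have "is_ev n Y (inverse e)"
      unfolding is_ev_def
    proof (rule exI[of _ v], intro conjI allI impI)
      show "\<exists>i<n. v i \<noteq> 0" by fact
      fix i assume "i < n"
      then show "(\<Sum>j<n. Y i j * v j) = inverse e * v i" using hback[of i] e0 by (simp add: field_simps)
    qed
    from ev_nonneg[OF cY this] have i1: "cnj (inverse e) = inverse e" and i2: "0 \<le> Re (inverse e)" by auto
    from i1 have c1: "cnj e = e" by (metis complex_cnj_inverse inverse_inverse_eq)
    from i2 have c2: "0 \<le> Re e / ((Re e)\<^sup>2 + (Im e)\<^sup>2)" by (simp add: Re_inverse power2_eq_square)
    have "0 < (Re e)\<^sup>2 + (Im e)\<^sup>2" using e0 by (simp add: sum_power2_gt_zero_iff complex_eq_iff)
    then show ?thesis using c1 c2 by (simp add: zero_le_divide_iff)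
  qed
  obtain S where S: "cpos n S" "cmult n S S = Z" and u: "\<forall>S'. cpos n S' \<and> cmult n S' S' = Z \<longrightarrow> S' = S"
    using psd_sqrt[OF Z(1) hZ evZ] by blast
  have "isqrt n Y = S" unfolding isqrt_def
  proof (rule the_equality)
    show "cpos n S \<and> cmult n (cmult n S S) Y = cid n" using S Z by simp
    fix S' assume a: "cpos n S' \<and> cmult n (cmult n S' S') Y = cid n"
    have sqS': "S' \<in> sq n" using a by (simp add: cpos_def)
    have "cmult n S' S' = cmult n (cmult n S' S') (cmult n Y Z)" using Z sqS' by (simp add: cmult_cid_right)
    also have "\<dots> = cmult n (cmult n (cmult n S' S') Y) Z" by (simp add: cmult_assoc)
    also have "\<dots> = Z" using a Z by (simp add: cmult_cid_left)
    finally show "S' = S" using u a by blast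
  qed
  then show ?thesis using S cpos_herm by auto
qed



lemma star_facts:
  assumes "star_vs sc st"
  shows "st 0 = 0" "st (- x) = - st x" "st (\<Sum>i<(n::nat). f i) = (\<Sum>i<n. st (f i))"
    "st (sc c y) = sc (cnj c) (st y)" "st (st y) = y" "st (a + b) = st a + st b"
proof -
  have add: "\<And>x y. st (x + y) = st x + st y" using assms by (simp add: star_vs_def)
  show z: "st 0 = 0" using add[of 0 0] by simp
  show "st (- x) = - st x" using add[of x "- x"] z by (simp add: eq_neg_iff_add_eq_0 add.commute)
  show "st (\<Sum>i<n. f i) = (\<Sum>i<n. st (f i))" by (induct n) (simp_all add: z add)
  show "st (sc c y) = sc (cnj c) (st y)" "st (st y) = y" using assms by (simp_all add: star_vs_def)
  show "st (a + b) = st a + st b" by (rule add)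
qed

lemma mtriple_msa:
  assumes st: "star_vs sc st" and A: "A \<in> msa st n" and S: "cadj S = S"
  shows "mtriple sc n n S A S \<in> msa st n"
proof -
  have As: "A \<in> sq n" "\<And>i j. st (A j i) = A i j" using A by (auto simp: msa_def madj_def fun_eq_iff)
  have Sh: "\<And>i j. cnj (S j i) = S i j" using S by (auto simp: cadj_def fun_eq_iff)
  have "madj st (mtriple sc n n S A S) = mtriple sc n n S A S"
  proof (rule ext, rule ext)
    fix i j
    show "madj st (mtriple sc n n S A S) i j = mtriple sc n n S A S i j"
    proof (cases "i < n \<and> j < n")
      case False then show ?thesis by (auto simp: madj_def mtriple_def star_facts(1)[OF st])
    next
      case True
      have "madj st (mtriple sc n n S A S) i j = (\<Sum>p<n. \<Sum>q<n. sc (S p j * S i q) (A q p))"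
        using True by (simp add: madj_def mtriple_def star_facts[OF st] Sh As(2))
      also have "\<dots> = (\<Sum>q<n. \<Sum>p<n. sc (S p j * S i q) (A q p))" by (rule sum.swap)
      also have "\<dots> = mtriple sc n n S A S i j"
        using True by (simp add: mtriple_def mult.commute)
      finally show ?thesis .
    qed
  qed
  moreover have "mtriple sc n n S A S \<in> sq n" by (auto simp: rect_def mtriple_def)
  ultimately show ?thesis by (simp add: msa_def)
qed

lemma mtriple_amp:
  assumes "Vector_Spaces.linear scV scW \<phi>"
  shows "amp \<phi> (mtriple scV n k L A R) = mtriple scW n k L (amp \<phi> A) R"
proof -
  interpret lin: Vector_Spaces.linear scV scW \<phi> by fact
  show ?thesis by (auto simp: amp_def mtriple_def fun_eq_iff lin.sum lin.scale)
qed

lemma neg_msa: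
  assumes st: "star_vs sc st" and Z: "Z \<in> msa (ust st) n"
  shows "(\<lambda>i j. - fst (Z i j)) \<in> msa st n"
  using Z by (auto simp: msa_def madj_def rect_def fun_eq_iff ust_def star_facts[OF st] prod_eq_iff)

definition uset where
  "uset sc \<nu> n A X = {ereal t | t. t > 0 \<and> posinv n (shiftm n t X) \<and>
      \<nu> n (mtriple sc n n (isqrt n (shiftm n t X)) A (isqrt n (shiftm n t X))) \<le> 1}"

lemma unorm_uset: "unorm sc \<nu> n A X = Inf (uset sc \<nu> n A X)"
  by (simp add: unorm_def uset_def)

lemma Inf_zero_mono:
  assumes "Inf S1 = (0::ereal)" "S1 \<subseteq> S2" "\<forall>x\<in>S2. 0 \<le> x"
  shows "Inf S2 = 0"
proof (rule antisym)
  show "Inf S2 \<le> 0" using assms(1,2) Inf_superset_mono by metis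
  show "0 \<le> Inf S2" using assms(3) by (auto intro: Inf_greatest)
qed

lemma uset_nonneg: "\<forall>x\<in>uset sc \<nu> n A X. 0 \<le> x"
  by (auto simp: uset_def)

lemma uset_mono:
  assumes st: "star_vs scV stV" and lin: "Vector_Spaces.linear scV scW \<phi>"
    and A: "A \<in> msa stV n"
    and c: "\<And>M. M \<in> msa stV n \<Longrightarrow> \<nu> n M \<le> 1 \<Longrightarrow> \<omega> n (amp \<phi> M) \<le> 1"
  shows "uset scV \<nu> n A X \<subseteq> uset scW \<omega> n (amp \<phi> A) X"
proof
  fix x assume "x \<in> uset scV \<nu> n A X"
  then obtain t where t: "x = ereal t" "t > 0" "posinv n (shiftm n t X)"
    "\<nu> n (mtriple scV n n (isqrt n (shiftm n t X)) A (isqrt n (shiftm n t X))) \<le> 1"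
    by (auto simp: uset_def)
  let ?S = "isqrt n (shiftm n t X)"
  have "cadj ?S = ?S" using isqrt_herm[OF t(3)] by simp
  then have "mtriple scV n n ?S A ?S \<in> msa stV n" by (rule mtriple_msa[OF st A])
  then have "\<omega> n (amp \<phi> (mtriple scV n n ?S A ?S)) \<le> 1" using c t(4) by blast
  then have "\<omega> n (mtriple scW n n ?S (amp \<phi> A) ?S) \<le> 1" by (simp add: mtriple_amp[OF lin])
  then show "x \<in> uset scW \<omega> n (amp \<phi> A) X" using t by (auto simp: uset_def)
qed

lemma uset_mono2:
  assumes st: "star_vs scV stV" and lin: "Vector_Spaces.linear scV scW \<phi>"
    and A: "A \<in> msa stV n"
    and c: "\<And>M. M \<in> msa stV n \<Longrightarrow> \<omega> n (amp \<phi> M) \<le> 1 \<Longrightarrow> \<nu> n M \<le> 1"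
  shows "uset scW \<omega> n (amp \<phi> A) X \<subseteq> uset scV \<nu> n A X"
proof
  fix x assume "x \<in> uset scW \<omega> n (amp \<phi> A) X"
  then obtain t where t: "x = ereal t" "t > 0" "posinv n (shiftm n t X)"
    "\<omega> n (mtriple scW n n (isqrt n (shiftm n t X)) (amp \<phi> A) (isqrt n (shiftm n t X))) \<le> 1"
    by (auto simp: uset_def)
  let ?S = "isqrt n (shiftm n t X)"
  have "cadj ?S = ?S" using isqrt_herm[OF t(3)] by simp
  then have M: "mtriple scV n n ?S A ?S \<in> msa stV n" by (rule mtriple_msa[OF st A])
  have "\<omega> n (amp \<phi> (mtriple scV n n ?S A ?S)) \<le> 1" using t(4) by (simp add: mtriple_amp[OF lin])
  then have "\<nu> n (mtriple scV n n ?S A ?S) \<le> 1" using c M by blast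
  then show "x \<in> uset scV \<nu> n A X" using t by (auto simp: uset_def)
qed

lemma LinfMOS_zero:
  assumes L: "LinfMOS sc st \<nu>"
  shows "\<nu> n (\<lambda>i j. 0) = 0"
proof -
  have st: "star_vs sc st" using L by (simp add: LinfMOS_def)
  interpret vs: Vector_Spaces.vector_space sc using st by (simp add: star_vs_def)
  have m: "(\<lambda>i j. 0) \<in> msa st n" by (auto simp: msa_def madj_def rect_def star_facts(1)[OF st])
  have hom: "\<forall>n. \<forall>A\<in>msa st n. \<forall>t>0. \<nu> n (\<lambda>i j. sc (complex_of_real t) (A i j)) = t * \<nu> n A"
    using L by (simp add: LinfMOS_def)
  have "\<nu> n (\<lambda>i j. sc (complex_of_real 2) ((\<lambda>i j. 0) i j)) = 2 * \<nu> n (\<lambda>i j. 0)"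
    by (rule hom[rule_format, OF m]) simp
  then show ?thesis by simp
qed

lemma selfadj_zero:
  assumes LV: "LinfMOS scV stV \<nu>" and LW: "LinfMOS scW stW \<omega>"
    and lin: "Vector_Spaces.linear scV scW \<phi>"
    and iso: "\<And>A. A \<in> msa stV 1 \<Longrightarrow> \<omega> 1 (amp \<phi> A) = \<nu> 1 A"
    and x: "stV x = x" "\<phi> x = 0"
  shows "x = 0"
proof -
  interpret lin: Vector_Spaces.linear scV scW \<phi> by fact
  have stV: "star_vs scV stV" using LV by (simp add: LinfMOS_def)
  define M where "M = (\<lambda>(i::nat) (j::nat). if i = 0 \<and> j = 0 then x else 0)"
  have M: "M \<in> msa stV 1" using x by (auto simp: M_def msa_def madj_def rect_def star_facts(1)[OF stV] fun_eq_iff)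
  have M': "(\<lambda>i j. - M i j) \<in> msa stV 1"
    using x by (auto simp: M_def msa_def madj_def rect_def star_facts(1,2)[OF stV] fun_eq_iff)
  have a1: "amp \<phi> M = (\<lambda>i j. 0)" using x by (auto simp: amp_def M_def fun_eq_iff)
  have a2: "amp \<phi> (\<lambda>i j. - M i j) = (\<lambda>i j. 0)" using x by (auto simp: amp_def M_def fun_eq_iff lin.neg)
  have "\<nu> 1 M = 0" using iso[OF M] a1 LinfMOS_zero[OF LW] by simp
  moreover have "\<nu> 1 (\<lambda>i j. - M i j) = 0" using iso[OF M'] a2 LinfMOS_zero[OF LW] by simp
  ultimately have "\<forall>i j. M i j = 0" using LV M unfolding LinfMOS_def by blast
  then have "M 0 0 = 0" by blast
  moreover have "M 0 0 = x" by (simp add: M_def)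
  ultimately show ?thesis by simp
qed

lemma phi_inj:
  assumes LV: "LinfMOS scV stV \<nu>" and LW: "LinfMOS scW stW \<omega>"
    and lin: "Vector_Spaces.linear scV scW \<phi>"
    and com: "\<And>x. \<phi> (stV x) = stW (\<phi> x)"
    and iso: "\<And>A. A \<in> msa stV 1 \<Longrightarrow> \<omega> 1 (amp \<phi> A) = \<nu> 1 A"
    and d: "\<phi> d = 0"
  shows "d = 0"
proof -
  interpret lin: Vector_Spaces.linear scV scW \<phi> by fact
  have stV: "star_vs scV stV" using LV by (simp add: LinfMOS_def)
  have stW: "star_vs scW stW" using LW by (simp add: LinfMOS_def)
  have "stV (d - stV d) = stV (d + - stV d)" by (simp only: diff_conv_add_uminus)
  also have "\<dots> = stV d + - stV (stV d)" by (simp only: star_facts(2,6)[OF stV])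
  also have "\<dots> = stV d - d" by (simp only: star_facts(5)[OF stV] diff_conv_add_uminus)
  finally have sd: "stV (d - stV d) = stV d - d" .
  have a: "d + stV d = 0"
  proof (rule selfadj_zero[OF LV LW lin])
    show "\<And>A. A \<in> msa stV 1 \<Longrightarrow> \<omega> 1 (amp \<phi> A) = \<nu> 1 A" by (rule iso)
    show "stV (d + stV d) = d + stV d" by (simp only: star_facts(5,6)[OF stV] add.commute)
    show "\<phi> (d + stV d) = 0" by (simp only: lin.add com d star_facts(1)[OF stW] add_0_left)
  qed
  have b: "scV \<i> (d - stV d) = 0"
  proof (rule selfadj_zero[OF LV LW lin])
    show "\<And>A. A \<in> msa stV 1 \<Longrightarrow> \<omega> 1 (amp \<phi> A) = \<nu> 1 A" by (rule iso)
    show "stV (scV \<i> (d - stV d)) = scV \<i> (d - stV d)"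
      unfolding star_facts(4)[OF stV] sd
      by (metis complex_cnj_i minus_diff_eq lin.vs1.scale_minus_left lin.vs1.scale_minus_right)
    show "\<phi> (scV \<i> (d - stV d)) = 0"
      by (simp only: lin.scale lin.diff com d star_facts(1)[OF stW] diff_self lin.vs2.scale_zero_right)
  qed
  have i0: "\<i> \<noteq> (0::complex)" by simp
  have b': "d - stV d = 0" using b lin.vs1.scale_eq_0_iff i0 by blast
  have t2: "(1 + 1 :: complex) = 2" by simp
  have "scV (1 + 1) d = scV 1 d + scV 1 d" by (rule lin.vs1.scale_left_distrib)
  then have s2: "scV 2 d = d + d" by (simp only: t2 lin.vs1.scale_one)
  have "d + d = (d + stV d) + (d - stV d)" by (simp add: algebra_simps)
  then have "scV 2 d = (d + stV d) + (d - stV d)" using s2 by simp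
  then have "scV 2 d = 0" by (simp only: a b' add_0_left)
  then show ?thesis by simp
qed



lemma amp_ue_msa:
  assumes stV: "star_vs scV stV" and stW: "star_vs scW stW"
    and lin: "Vector_Spaces.linear scV scW \<phi>" and com: "\<And>x. \<phi> (stV x) = stW (\<phi> x)"
    and Z: "Z \<in> msa (ust stV) n"
  shows "amp (unital_ext \<phi>) Z \<in> msa (ust stW) n"
proof -
  interpret lin: Vector_Spaces.linear scV scW \<phi> by fact
  have sq: "Z \<in> sq n" and sa: "\<And>i j. ust stV (Z j i) = Z i j"
    using Z by (auto simp: msa_def madj_def fun_eq_iff)
  have "amp (unital_ext \<phi>) Z \<in> sq n"
    using sq by (auto simp: rect_def amp_def unital_ext_def zero_prod_def)
  moreover have "madj (ust stW) (amp (unital_ext \<phi>) Z) = amp (unital_ext \<phi>) Z"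
  proof (rule ext, rule ext)
    fix i j
    have "fst (ust stV (Z j i)) = fst (Z i j)" "snd (ust stV (Z j i)) = snd (Z i j)" using sa by auto
    then show "madj (ust stW) (amp (unital_ext \<phi>) Z) i j = amp (unital_ext \<phi>) Z i j"
      by (auto simp: madj_def amp_def unital_ext_def ust_def com[symmetric])
  qed
  ultimately show ?thesis by (simp add: msa_def)
qed

lemma amp_ue_fst:
  assumes lin: "Vector_Spaces.linear scV scW \<phi>"
  shows "(\<lambda>i j. - fst (amp (unital_ext \<phi>) Z i j)) = amp \<phi> (\<lambda>i j. - fst (Z i j))"
proof -
  interpret lin: Vector_Spaces.linear scV scW \<phi> by fact
  show ?thesis by (auto simp: amp_def unital_ext_def fun_eq_iff lin.neg)
qed

lemma amp_ue_snd: "(\<lambda>i j. - snd (amp (unital_ext \<phi>) Z i j)) = (\<lambda>i j. - snd (Z i j))"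
  by (auto simp: amp_def unital_ext_def fun_eq_iff)

theorem theorem3p13:
  fixes scV :: "complex \<Rightarrow> 'v::ab_group_add \<Rightarrow> 'v" and stV :: "'v \<Rightarrow> 'v"
    and \<nu> :: "nat \<Rightarrow> (nat \<Rightarrow> nat \<Rightarrow> 'v) \<Rightarrow> real"
    and scW :: "complex \<Rightarrow> 'w::ab_group_add \<Rightarrow> 'w" and stW :: "'w \<Rightarrow> 'w"
    and \<omega> :: "nat \<Rightarrow> (nat \<Rightarrow> nat \<Rightarrow> 'w) \<Rightarrow> real"
    and \<phi> :: "'v \<Rightarrow> 'w"
  assumes "LinfMOS scV stV \<nu>" and "LinfMOS scW stW \<omega>"
    and "gauge_contractive scV stV \<nu> scW stW \<omega> \<phi>"
  shows "completely_positive scV stV \<nu> scW stW \<omega> (unital_ext \<phi>) \<and>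
         (gauge_isometric scV stV \<nu> scW stW \<omega> \<phi> \<longrightarrow>
         complete_order_embedding scV stV \<nu> scW stW \<omega> (unital_ext \<phi>))"
proof -
  note LV = assms(1) and LW = assms(2)
  have stV: "star_vs scV stV" using LV by (simp add: LinfMOS_def)
  have stW: "star_vs scW stW" using LW by (simp add: LinfMOS_def)
  have lin: "Vector_Spaces.linear scV scW \<phi>" and com: "\<And>x. \<phi> (stV x) = stW (\<phi> x)"
    and contr: "\<And>n A. A \<in> msa stV n \<Longrightarrow> \<omega> n (amp \<phi> A) \<le> \<nu> n A"
    using assms(3) by (auto simp: gauge_contractive_def)
  have CP: "completely_positive scV stV \<nu> scW stW \<omega> (unital_ext \<phi>)"
    unfolding completely_positive_def
  proof (intro allI impI)
    fix n Z assume u: "upos scV stV \<nu> n Z"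
    then have Z: "Z \<in> msa (ust stV) n"
      and u0: "unorm scV \<nu> n (\<lambda>i j. - fst (Z i j)) (\<lambda>i j. - snd (Z i j)) = 0"
      by (auto simp: upos_def)
    have A: "(\<lambda>i j. - fst (Z i j)) \<in> msa stV n" by (rule neg_msa[OF stV Z])
    have sub: "uset scV \<nu> n (\<lambda>i j. - fst (Z i j)) (\<lambda>i j. - snd (Z i j))
      \<subseteq> uset scW \<omega> n (amp \<phi> (\<lambda>i j. - fst (Z i j))) (\<lambda>i j. - snd (Z i j))"
      by (rule uset_mono[OF stV lin A]) (use contr in force)
    have "unorm scW \<omega> n (\<lambda>i j. - fst (amp (unital_ext \<phi>) Z i j)) (\<lambda>i j. - snd (amp (unital_ext \<phi>) Z i j)) = 0"
      unfolding amp_ue_fst[OF lin] amp_ue_snd unorm_uset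
      by (rule Inf_zero_mono[OF _ sub uset_nonneg]) (use u0 in \<open>simp add: unorm_uset\<close>)
    then show "upos scW stW \<omega> n (amp (unital_ext \<phi>) Z)"
      using amp_ue_msa[OF stV stW lin com Z] by (simp add: upos_def)
  qed
  moreover have "complete_order_embedding scV stV \<nu> scW stW \<omega> (unital_ext \<phi>)"
    if iso: "gauge_isometric scV stV \<nu> scW stW \<omega> \<phi>"
  proof -
    have isoe: "\<And>n A. A \<in> msa stV n \<Longrightarrow> \<omega> n (amp \<phi> A) = \<nu> n A"
      using iso by (auto simp: gauge_isometric_def)
    interpret lin: Vector_Spaces.linear scV scW \<phi> by (rule lin)
    have injphi: "\<phi> x = \<phi> y \<Longrightarrow> x = y" for x y
    proof -
      assume "\<phi> x = \<phi> y"
      then have "\<phi> (x - y) = 0" by (simp add: lin.diff)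
      then show "x = y" using phi_inj[OF LV LW lin com isoe[where n=1], of "x - y"] by simp
    qed
    have inj: "inj (unital_ext \<phi>)"
      by (rule injI) (auto simp: unital_ext_def prod_eq_iff intro: injphi)
    have emb: "upos scV stV \<nu> n Z" if Z: "Z \<in> sq n" and uw: "upos scW stW \<omega> n (amp (unital_ext \<phi>) Z)" for n Z
    proof -
      have ZW: "amp (unital_ext \<phi>) Z \<in> msa (ust stW) n"
        and u0: "unorm scW \<omega> n (\<lambda>i j. - fst (amp (unital_ext \<phi>) Z i j)) (\<lambda>i j. - snd (amp (unital_ext \<phi>) Z i j)) = 0"
        using uw by (auto simp: upos_def)
      have saW: "\<And>i j. ust stW (unital_ext \<phi> (Z j i)) = unital_ext \<phi> (Z i j)"
        using ZW by (auto simp: msa_def madj_def amp_def fun_eq_iff)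
      have "madj (ust stV) Z = Z"
      proof (rule ext, rule ext)
        fix i j
        have "stW (\<phi> (fst (Z j i))) = \<phi> (fst (Z i j))" "cnj (snd (Z j i)) = snd (Z i j)"
          using saW[of j i] by (auto simp: ust_def unital_ext_def)
        then have "stV (fst (Z j i)) = fst (Z i j)" "cnj (snd (Z j i)) = snd (Z i j)"
          by (auto simp: com[symmetric] intro: injphi)
        then show "madj (ust stV) Z i j = Z i j" by (simp add: madj_def ust_def prod_eq_iff)
      qed
      then have ZV: "Z \<in> msa (ust stV) n" using Z by (simp add: msa_def)
      have A: "(\<lambda>i j. - fst (Z i j)) \<in> msa stV n" by (rule neg_msa[OF stV ZV])
      have sub: "uset scW \<omega> n (amp \<phi> (\<lambda>i j. - fst (Z i j))) (\<lambda>i j. - snd (Z i j))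
        \<subseteq> uset scV \<nu> n (\<lambda>i j. - fst (Z i j)) (\<lambda>i j. - snd (Z i j))"
        by (rule uset_mono2[OF stV lin A]) (use isoe in force)
      have "unorm scV \<nu> n (\<lambda>i j. - fst (Z i j)) (\<lambda>i j. - snd (Z i j)) = 0"
        unfolding unorm_uset
        by (rule Inf_zero_mono[OF _ sub uset_nonneg])
           (use u0 in \<open>simp add: unorm_uset amp_ue_fst[OF lin] amp_ue_snd\<close>)
      then show ?thesis using ZV by (simp add: upos_def)
    qed
    show ?thesis
      unfolding complete_order_embedding_def
    proof (intro conjI allI ballI)
      show "inj (unital_ext \<phi>)" by (rule inj)
      fix n and Z :: "nat \<Rightarrow> nat \<Rightarrow> 'v \<times> complex" assume Z: "Z \<in> sq n"
      show "upos scW stW \<omega> n (amp (unital_ext \<phi>) Z) = upos scV stV \<nu> n Z"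
        using emb[OF Z] CP unfolding completely_positive_def by blast
    qed
  qed
  ultimately show ?thesis by blast
qed


end
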